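(* Let $x_i$ be a mechanism for agent $i$ satisfying (P) and (IC), with indirect utility $U_i(s_i)=\max_{t\in[\underline s,\overline s]}U_i(t;s_i)$ on $[\underline s,\overline s]$. Then there is a function $\tilde U_i:[0,1]\to\mathbb R$ coinciding with $U_i$ on $[\underline s,\overline s]$ that is nondecreasing, convex, $2$-Lipschitz, and satisfies $0\le\tilde U_i\le\overline U_i$ on $[0,1]$.
   Context: Setup. A state $\omega\in\{-1,+1\}$ is drawn with probability $1/2$ each. There are $n\ge2$ agents. Conditional on $\omega$, signals are i.i.d. with distribution $\mathbb F_\omega$ on $[0,1]$, normalized so that $s_i=\mathbb P[\omega=+1\mid s_i]$; $\mathbb F_{-1},\mathbb F_{+1}$ mutually absolutely continuous with densities; $\mathbb F=(\mathbb F_{-1}+\mathbb F_{+1})/2$ has density supported on a non-singleton interval with endpoints $\underline s<\overline s$ in $[0,1]$. A mechanism for agent $i$ is measurable $x_i:[\underline s,\overline s]^n\to[0,1]$ (probability of receiving a good worth $\omega$, else payoff $0$). (P): $\mathbb E[\omega x_i(s_i,s_{-i})\mid s_i]\ge0$; (IC): $\mathbb E[\omega x_i(s_i,s_{-i})\mid s_i]\ge\mathbb E[\omega x_i(\hat s_i,s_{-i})\mid s_i]$, for all $s_i,\hat s_i$ in the support. For a report $t$ and a belief $s\in[0,1]$, $U_i(t;s)=s\,\mathbb E[x_i(t,s_{-i})\mid\omega=+1]-(1-s)\,\mathbb E[x_i(t,s_{-i})\mid\omega=-1]$ (equal to $\mathbb E[\omega x_i(t,s_{-i})\mid s_i=s]$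 for $s$ in the support). The first-best payoff is, for $s\in[0,1]$, $\overline U_i(s)=s\,\mathbb P[e(s,s_{-i})\mid\omega=+1]-(1-s)\,\mathbb P[e(s,s_{-i})\mid\omega=-1]$ where $e(s,s_{-i})$ is the event $s\prod_{k\ne i}s_k\ge(1-s)\prod_{k\ne i}(1-s_k)$ (i.e., $\mathrm{LR}(s,s_{-i})\ge1$); it is the interim payoff under the efficient allocation. *)

theory Defs
  imports "HOL-Probability.Probability"
begin

text \<open>The conditional signal law F_omega has
  Lebesgue density f (f = fp for omega = +1, f = fm for omega = -1).\<close>

definition others_law :: "(real \<Rightarrow> real) \<Rightarrow> nat \<Rightarrow> nat \<Rightarrow> (nat \<Rightarrow> real) measure" where
  "others_law f n i = PiM ({0..<n} - {i}) (\<lambda>_. density lborel (\<lambda>s. ennreal (f s)))"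

definition cond_alloc ::
  "((nat \<Rightarrow> real) \<Rightarrow> real) \<Rightarrow> (real \<Rightarrow> real) \<Rightarrow> nat \<Rightarrow> nat \<Rightarrow> real \<Rightarrow> real" where
  "cond_alloc x f n i t = (\<integral>\<sigma>. x (\<sigma>(i := t)) \<partial>(others_law f n i))"

definition util ::
  "((nat \<Rightarrow> real) \<Rightarrow> real) \<Rightarrow> (real \<Rightarrow> real) \<Rightarrow> (real \<Rightarrow> real) \<Rightarrow> nat \<Rightarrow> nat \<Rightarrow> real \<Rightarrow> real \<Rightarrow> real" where
  "util x fp fm n i t s = s * cond_alloc x fp n i t - (1 - s) * cond_alloc x fm n i t"

definition indirect_util ::
  "((nat \<Rightarrow> real) \<Rightarrow> real) \<Rightarrow> (real \<Rightarrow> real) \<Rightarrow> (real \<Rightarrow> real) \<Rightarrow> nat \<Rightarrow> nat \<Rightarrow> real \<Rightarrow> real \<Rightarrow> real \<Rightarrow> real" where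
  "indirect_util x fp fm n i slo shi s = (SUP t\<in>{slo..shi}. util x fp fm n i t s)"

definition eff_event :: "nat \<Rightarrow> nat \<Rightarrow> real \<Rightarrow> (nat \<Rightarrow> real) set" where
  "eff_event n i s = {\<sigma>. s * (\<Prod>k\<in>{0..<n} - {i}. \<sigma> k) \<ge> (1 - s) * (\<Prod>k\<in>{0..<n} - {i}. (1 - \<sigma> k))}"

definition first_best ::
  "(real \<Rightarrow> real) \<Rightarrow> (real \<Rightarrow> real) \<Rightarrow> nat \<Rightarrow> nat \<Rightarrow> real \<Rightarrow> real" where
  "first_best fp fm n i s =
     s * measure (others_law fp n i) (eff_event n i s \<inter> space (others_law fp n i))
     - (1 - s) * measure (others_law fm n i) (eff_event n i s \<inter> space (others_law fm n i))"

end

theory Submission imports Defs begin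


lemma sup_affine:
  fixes al be :: "real \<Rightarrow> real" and T :: "real set"
  assumes T: "T \<noteq> {}" and ab: "\<And>t. t\<in>T \<Longrightarrow> 0 \<le> al t \<and> al t \<le> 1 \<and> 0 \<le> be t \<and> be t \<le> 1"
  defines "F \<equiv> \<lambda>s. max 0 (SUP t\<in>T. s * al t - (1-s) * be t)"
  shows "mono_on {0..1} F" "convex_on {0..1} F" "2-lipschitz_on {0..1} F"
    "\<And>s t. t \<in> T \<Longrightarrow> s * al t - (1-s) * be t \<le> F s" "\<And>s. F s \<ge> 0"
    "\<And>s c. c \<ge> 0 \<Longrightarrow> (\<And>t. t \<in> T \<Longrightarrow> s * al t - (1-s) * be t \<le> c) \<Longrightarrow> F s \<le> c"
    "\<And>s t. t \<in> T \<Longrightarrow> 0 \<le> s * al t - (1-s) * be t \<Longrightarrow> F s = (SUP t\<in>T. s * al t - (1-s) * be t)"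
proof -
  define u where "u t s = s * al t - (1-s) * be t" for t s
  define S where "S s = (SUP t\<in>T. u t s)" for s
  have F: "F s = max 0 (S s)" for s unfolding F_def S_def u_def by simp
  have bdd: "bdd_above ((\<lambda>t. u t s) ` T)" for s
  proof (rule bdd_aboveI2)
    fix t assume "t \<in> T"
    show "u t s \<le> \<bar>s\<bar> + \<bar>1-s\<bar>"
    proof -
      have "\<bar>s * al t\<bar> \<le> \<bar>s\<bar>" using ab[OF \<open>t \<in> T\<close>] by (simp add: abs_mult mult_left_le)
      moreover have "\<bar>(1-s) * be t\<bar> \<le> \<bar>1-s\<bar>" using ab[OF \<open>t \<in> T\<close>] by (simp add: abs_mult mult_left_le)
      ultimately show ?thesis unfolding u_def by linarith
    qed
  qed
  have upper: "u t s \<le> S s" if "t \<in> T" for t s unfolding S_def by (rule cSUP_upper[OF that bdd])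
  have least: "S s \<le> c" if "\<And>t. t \<in> T \<Longrightarrow> u t s \<le> c" for s c
    unfolding S_def using T that by (intro cSUP_least) auto
  have umono: "u t s \<le> u t s' \<and> u t s' \<le> u t s + 2 * (s' - s)" if "t \<in> T" "s \<le> s'" for t s s'
  proof -
    have eq: "u t s' = u t s + (s' - s) * (al t + be t)" unfolding u_def by algebra
    have "0 \<le> (s' - s) * (al t + be t)" using ab[OF that(1)] that(2) by simp
    moreover have "(s' - s) * (al t + be t) \<le> (s' - s) * 2" using ab[OF that(1)] that(2)
      by (intro mult_left_mono) auto
    ultimately show ?thesis unfolding eq by linarith
  qed
  have Smono: "S s \<le> S s' \<and> S s' \<le> S s + 2 * (s' - s)" if "s \<le> s'" for s s'
  proof
    show "S s \<le> S s'" by (rule least) (meson umono[OF _ that] upper order_trans)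
    show "S s' \<le> S s + 2 * (s' - s)" by (rule least) (smt (verit) umono[OF _ that] upper)
  qed
  show "mono_on {0..1} F"
  proof (rule mono_onI)
    fix r s :: real assume "r \<le> s"
    then have "S r \<le> S s" using Smono by blast
    then show "F r \<le> F s" unfolding F by (simp add: max_def)
  qed
  show "convex_on {0..1} F"
  proof (rule convex_onI)
    fix l x y :: real assume l: "l > 0" "l < 1"
    have "S ((1 - l) *\<^sub>R x + l *\<^sub>R y) \<le> (1 - l) * S x + l * S y"
    proof (rule least)
      fix t assume t: "t \<in> T"
      have "u t ((1 - l) *\<^sub>R x + l *\<^sub>R y) = (1 - l) * u t x + l * u t y" unfolding u_def by (simp add: algebra_simps)
      also have "\<dots> \<le> (1 - l) * S x + l * S y" using upper[OF t, of x] upper[OF t, of y] l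
        by (intro add_mono mult_left_mono) auto
      finally show "u t ((1 - l) *\<^sub>R x + l *\<^sub>R y) \<le> (1 - l) * S x + l * S y" .
    qed
    moreover have "(1 - l) * S x + l * S y \<le> (1 - l) * F x + l * F y" unfolding F using l
      by (intro add_mono mult_left_mono) auto
    moreover have "0 \<le> (1 - l) * F x + l * F y" unfolding F using l by auto
    ultimately show "F ((1 - l) *\<^sub>R x + l *\<^sub>R y) \<le> (1 - l) * F x + l * F y" unfolding F[of "_ + _"] by linarith
  qed (simp add: convex_real_interval)
  show "2-lipschitz_on {0..1} F"
  proof (rule lipschitz_onI)
    fix x y :: real
    have *: "\<bar>F a - F b\<bar> \<le> 2 * \<bar>a - b\<bar>" if "a \<le> b" for a b
      using Smono[OF that] that unfolding F by (auto simp: abs_if max_def)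
    show "dist (F x) (F y) \<le> 2 * dist x y"
      unfolding dist_real_def using *[of x y] *[of y x] by (cases "x \<le> y") (auto simp: abs_minus_commute)
  qed simp
  show "\<And>s t. t \<in> T \<Longrightarrow> s * al t - (1-s) * be t \<le> F s"
  proof -
    fix s t assume "t \<in> T"
    then have "u t s \<le> S s" by (rule upper)
    then show "s * al t - (1-s) * be t \<le> F s" unfolding F u_def by linarith
  qed
  show "\<And>s. F s \<ge> 0" unfolding F by simp
  show "\<And>s c. c \<ge> 0 \<Longrightarrow> (\<And>t. t \<in> T \<Longrightarrow> s * al t - (1-s) * be t \<le> c) \<Longrightarrow> F s \<le> c"
  proof -
    fix s c assume c: "c \<ge> 0" "\<And>t. t \<in> T \<Longrightarrow> s * al t - (1-s) * be t \<le> c"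
    have "S s \<le> c" by (rule least) (use c in \<open>simp add: u_def\<close>)
    then show "F s \<le> c" unfolding F using c by simp
  qed
  show "\<And>s t. t \<in> T \<Longrightarrow> 0 \<le> s * al t - (1-s) * be t \<Longrightarrow> F s = (SUP t\<in>T. s * al t - (1-s) * be t)"
  proof -
    fix s t assume "t \<in> T" "0 \<le> s * al t - (1-s) * be t"
    then have "0 \<le> S s" using upper[of t s] unfolding u_def by linarith
    then show "F s = (SUP t\<in>T. s * al t - (1-s) * be t)" unfolding F unfolding S_def u_def by simp
  qed
qed



lemma PiM_density_prod:
  fixes a :: "real \<Rightarrow> real" and J :: "nat set"
  assumes J: "finite J" and am[measurable]: "a \<in> borel_measurable borel" and an: "\<And>s. a s \<ge> 0"
    and sf: "sigma_finite_measure (density lborel a)"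
  shows "PiM J (\<lambda>_. density lborel a) = density (PiM J (\<lambda>_. lborel)) (\<lambda>\<sigma>. ennreal (\<Prod>k\<in>J. a (\<sigma> k)))"
proof -
  interpret P: product_sigma_finite "\<lambda>_. density lborel a"
    unfolding product_sigma_finite_def using sf by simp
  interpret L: product_sigma_finite "\<lambda>_. lborel :: real measure"
    unfolding product_sigma_finite_def by (simp add: lborel.sigma_finite_measure_axioms)
  show ?thesis
  proof (rule sym, rule P.PiM_eqI[OF J])
    show "sets (density (PiM J (\<lambda>_. lborel)) (\<lambda>\<sigma>. ennreal (\<Prod>k\<in>J. a (\<sigma> k)))) = sets (PiM J (\<lambda>_. density lborel a))"
      by (auto intro!: sets_PiM_cong)
  next
    fix A assume A: "\<And>i. i \<in> J \<Longrightarrow> A i \<in> sets (density lborel a)"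
    then have A': "\<And>i. i \<in> J \<Longrightarrow> A i \<in> sets borel" by simp
    have "emeasure (density (PiM J (\<lambda>_. lborel)) (\<lambda>\<sigma>. ennreal (\<Prod>k\<in>J. a (\<sigma> k)))) (PiE J A)
       = (\<integral>\<^sup>+ \<sigma>. ennreal (\<Prod>k\<in>J. a (\<sigma> k)) * indicator (PiE J A) \<sigma> \<partial>PiM J (\<lambda>_. lborel))"
      by (rule emeasure_density) (auto intro!: sets_PiM_I_finite J A')
    also have "\<dots> = (\<integral>\<^sup>+ \<sigma>. (\<Prod>k\<in>J. ennreal (a (\<sigma> k)) * indicator (A k) (\<sigma> k)) \<partial>PiM J (\<lambda>_. lborel))"
      by (intro nn_integral_cong) (auto simp: prod_ennreal an prod.distrib indicator_def PiE_iff space_PiM J prod.neutral)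
    also have "\<dots> = (\<Prod>k\<in>J. \<integral>\<^sup>+ s. ennreal (a s) * indicator (A k) s \<partial>lborel)"
      by (rule L.product_nn_integral_prod[OF J]) (use A' in auto)
    also have "\<dots> = (\<Prod>k\<in>J. emeasure (density lborel a) (A k))"
      by (intro prod.cong refl emeasure_density[symmetric]) (use A' in auto)
    finally show "emeasure (density (PiM J (\<lambda>_. lborel)) (\<lambda>\<sigma>. ennreal (\<Prod>k\<in>J. a (\<sigma> k)))) (PiE J A) = (\<Prod>k\<in>J. emeasure (density lborel a) (A k))" .
  qed
qed



lemma fb_bound:
  fixes g :: "real \<Rightarrow> real" and J :: "nat set" and y :: "(nat \<Rightarrow> real) \<Rightarrow> real" and s :: real
    and A B :: "(nat \<Rightarrow> real) \<Rightarrow> real" and Q :: "(nat \<Rightarrow> real) measure"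
  assumes J: "finite J" and gm[measurable]: "g \<in> borel_measurable borel" and gn: "\<And>s. g s \<ge> 0"
    and A_def: "A = (\<lambda>\<sigma>. \<Prod>k\<in>J. \<sigma> k * g (\<sigma> k))" and B_def: "B = (\<lambda>\<sigma>. \<Prod>k\<in>J. (1 - \<sigma> k) * g (\<sigma> k))"
    and Q_def: "Q = PiM J (\<lambda>_. lborel :: real measure)"
  assumes PA: "prob_space (density Q A)" and PB: "prob_space (density Q B)"
    and An: "\<And>\<sigma>. A \<sigma> \<ge> 0" and Bn: "\<And>\<sigma>. B \<sigma> \<ge> 0"
    and ym[measurable]: "y \<in> borel_measurable Q" and yb: "\<And>\<sigma>. 0 \<le> y \<sigma> \<and> y \<sigma> \<le> 1"
  defines "E \<equiv> {\<sigma>. s * (\<Prod>k\<in>J. \<sigma> k) \<ge> (1 - s) * (\<Prod>k\<in>J. (1 - \<sigma> k))}"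
  shows "s * integral\<^sup>L (density Q A) y - (1-s) * integral\<^sup>L (density Q B) y
     \<le> s * measure (density Q A) (E \<inter> space (density Q A)) - (1-s) * measure (density Q B) (E \<inter> space (density Q B))"
proof -
  have Am[measurable]: "A \<in> borel_measurable Q" unfolding A_def Q_def by measurable
  have Bm[measurable]: "B \<in> borel_measurable Q" unfolding B_def Q_def by measurable
  have p1[measurable]: "(\<lambda>\<sigma>. \<Prod>k\<in>J. \<sigma> k) \<in> borel_measurable Q"
    using borel_measurable_prod[of J "\<lambda>k \<sigma>. \<sigma> k" Q] unfolding Q_def by simp
  have p2[measurable]: "(\<lambda>\<sigma>. \<Prod>k\<in>J. 1 - \<sigma> k) \<in> borel_measurable Q"
    unfolding Q_def by measurable
  have "{\<sigma> \<in> space Q. (1 - s) * (\<Prod>k\<in>J. (1 - \<sigma> k)) \<le> s * (\<Prod>k\<in>J. \<sigma> k)} \<in> sets Q"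
    by measurable
  moreover have "E \<inter> space Q = {\<sigma> \<in> space Q. (1 - s) * (\<Prod>k\<in>J. (1 - \<sigma> k)) \<le> s * (\<Prod>k\<in>J. \<sigma> k)}"
    unfolding E_def by auto
  ultimately have Em[measurable]: "E \<inter> space Q \<in> sets Q" by simp
  have im[measurable]: "indicator (E \<inter> space Q) \<in> borel_measurable Q" by measurable
  interpret PA: prob_space "density Q A" by (rule PA)
  interpret PB: prob_space "density Q B" by (rule PB)
  have intA: "integrable Q (\<lambda>\<sigma>. A \<sigma> * f \<sigma>)" if [measurable]: "f \<in> borel_measurable Q" "\<And>\<sigma>. \<bar>f \<sigma>\<bar> \<le> 1" for f
  proof -
    have "integrable (density Q A) f"
      by (rule PA.integrable_const_bound[where B=1]) (use that in auto)
    then show ?thesis using integrable_density[of f Q A] An by simp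
  qed
  have intB: "integrable Q (\<lambda>\<sigma>. B \<sigma> * f \<sigma>)" if [measurable]: "f \<in> borel_measurable Q" "\<And>\<sigma>. \<bar>f \<sigma>\<bar> \<le> 1" for f
  proof -
    have "integrable (density Q B) f"
      by (rule PB.integrable_const_bound[where B=1]) (use that in auto)
    then show ?thesis using integrable_density[of f Q B] Bn by simp
  qed
  have iy: "\<And>\<sigma>. \<bar>y \<sigma>\<bar> \<le> 1" using yb by (simp add: abs_le_iff)
  have ii: "\<And>\<sigma>. \<bar>indicator (E \<inter> space Q) \<sigma> :: real\<bar> \<le> 1" by (simp add: indicator_def)
  have sp: "space (density Q A) = space Q" "space (density Q B) = space Q" by simp_all
  have L: "s * integral\<^sup>L (density Q A) y - (1-s) * integral\<^sup>L (density Q B) y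
      = integral\<^sup>L Q (\<lambda>\<sigma>. s * (A \<sigma> * y \<sigma>) - (1-s) * (B \<sigma> * y \<sigma>))"
    using An Bn intA[OF ym iy] intB[OF ym iy] by (simp add: integral_density)
  have R: "s * measure (density Q A) (E \<inter> space (density Q A)) - (1-s) * measure (density Q B) (E \<inter> space (density Q B))
      = integral\<^sup>L Q (\<lambda>\<sigma>. s * (A \<sigma> * indicator (E \<inter> space Q) \<sigma>) - (1-s) * (B \<sigma> * indicator (E \<inter> space Q) \<sigma>))"
  proof -
    have "measure (density Q A) (E \<inter> space (density Q A)) = integral\<^sup>L (density Q A) (indicator (E \<inter> space Q))"
      by (simp add: sp)
    moreover have "measure (density Q B) (E \<inter> space (density Q B)) = integral\<^sup>L (density Q B) (indicator (E \<inter> space Q))"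
      by (simp add: sp)
    moreover have "integral\<^sup>L (density Q A) (indicator (E \<inter> space Q)) = integral\<^sup>L Q (\<lambda>\<sigma>. A \<sigma> * indicator (E \<inter> space Q) \<sigma>)"
      by (subst integral_density) (use An in auto)
    moreover have "integral\<^sup>L (density Q B) (indicator (E \<inter> space Q)) = integral\<^sup>L Q (\<lambda>\<sigma>. B \<sigma> * indicator (E \<inter> space Q) \<sigma>)"
      by (subst integral_density) (use Bn in auto)
    ultimately show ?thesis
      using intA[OF im ii] intB[OF im ii] by (simp only:) (simp)
  qed
  show ?thesis unfolding L R
  proof (rule integral_mono)
    show "integrable Q (\<lambda>\<sigma>. s * (A \<sigma> * y \<sigma>) - (1-s) * (B \<sigma> * y \<sigma>))"
      using intA[OF ym iy] intB[OF ym iy] by simp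
    show "integrable Q (\<lambda>\<sigma>. s * (A \<sigma> * indicator (E \<inter> space Q) \<sigma>) - (1-s) * (B \<sigma> * indicator (E \<inter> space Q) \<sigma>))"
      using intA[OF im ii] intB[OF im ii] by simp
    fix \<sigma> assume \<sigma>: "\<sigma> \<in> space Q"
    define G where "G = (\<Prod>k\<in>J. g (\<sigma> k))"
    define D where "D = s * (\<Prod>k\<in>J. \<sigma> k) - (1 - s) * (\<Prod>k\<in>J. (1 - \<sigma> k))"
    have G0: "G \<ge> 0" unfolding G_def by (simp add: gn prod_nonneg)
    have eq: "s * A \<sigma> - (1-s) * B \<sigma> = G * D"
      unfolding A_def B_def G_def D_def prod.distrib by (simp add: algebra_simps)
    have "y \<sigma> * (G * D) \<le> indicator (E \<inter> space Q) \<sigma> * (G * D)"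
    proof (cases "\<sigma> \<in> E")
      case True
      then have "D \<ge> 0" unfolding E_def D_def by simp
      then show ?thesis using True \<sigma> G0 yb[of \<sigma>] by (simp add: mult_left_le_one_le)
    next
      case False
      then have "D < 0" unfolding E_def D_def by simp
      then have "G * D \<le> 0" using G0 by (simp add: mult_nonneg_nonpos)
      then show ?thesis using False yb[of \<sigma>] by (simp add: mult_nonneg_nonpos)
    qed
    then show "s * (A \<sigma> * y \<sigma>) - (1-s) * (B \<sigma> * y \<sigma>) \<le> s * (A \<sigma> * indicator (E \<inter> space Q) \<sigma>) - (1-s) * (B \<sigma> * indicator (E \<inter> space Q) \<sigma>)"
      using eq by (smt (verit, best) right_diff_distrib mult.commute mult.left_commute)
  qed
qed

lemma prob_int_bounds:
  assumes "prob_space M" and [measurable]: "y \<in> borel_measurable M" and yb: "\<And>\<sigma>. 0 \<le> y \<sigma> \<and> y \<sigma> \<le> (1::real)"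
  shows "0 \<le> integral\<^sup>L M y \<and> integral\<^sup>L M y \<le> 1"
proof -
  interpret prob_space M by fact
  have "integrable M y" by (rule integrable_const_bound[where B=1]) (use yb in auto)
  then show ?thesis using yb by (auto intro!: integral_nonneg_AE integral_le_const)
qed

theorem lemmaA2:
  fixes n i :: nat and fp fm :: "real \<Rightarrow> real" and slo shi :: real
    and x :: "(nat \<Rightarrow> real) \<Rightarrow> real"
  assumes n2: "n \<ge> 2" and i: "i < n"
    \<comment> \<open>conditional signal laws F_{+1}, F_{-1} on [0,1] with densities fp, fm\<close>
    and fp_meas: "fp \<in> borel_measurable lborel" and fm_meas: "fm \<in> borel_measurable lborel"
    and fp_nonneg: "\<And>s. fp s \<ge> 0" and fm_nonneg: "\<And>s. fm s \<ge> 0"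
    and fp_prob: "(\<integral>\<^sup>+ s. ennreal (fp s) \<partial>lborel) = 1"
    and fm_prob: "(\<integral>\<^sup>+ s. ennreal (fm s) \<partial>lborel) = 1"
    \<comment> \<open>mutual absolute continuity\<close>
    and mac: "AE s in lborel. (fp s > 0 \<longleftrightarrow> fm s > 0)"
    \<comment> \<open>normalization: s = P[omega = +1 | s]\<close>
    and normal: "AE s in lborel. fp s = s * (fp s + fm s)"
    \<comment> \<open>density of F = (F_{-1}+F_{+1})/2 supported on the interval with endpoints slo < shi in [0,1]\<close>
    and bounds: "0 \<le> slo" "slo < shi" "shi \<le> 1"
    and supp_out: "AE s in lborel. s \<notin> {slo..shi} \<longrightarrow> (fp s + fm s) / 2 = 0"
    and supp_in: "AE s in lborel. s \<in> {slo<..<shi} \<longrightarrow> (fp s + fm s) / 2 > 0"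
    \<comment> \<open>mechanism for agent i\<close>
    and x_meas: "x \<in> borel_measurable (PiM {0..<n} (\<lambda>_. lborel))"
    and x_range: "\<And>\<sigma>. 0 \<le> x \<sigma> \<and> x \<sigma> \<le> 1"
    \<comment> \<open>(P) and (IC)\<close>
    and P: "\<And>s. s \<in> {slo..shi} \<Longrightarrow> util x fp fm n i s s \<ge> 0"
    and IC: "\<And>s t. s \<in> {slo..shi} \<Longrightarrow> t \<in> {slo..shi} \<Longrightarrow>
               util x fp fm n i s s \<ge> util x fp fm n i t s"
  shows "\<exists>Ut :: real \<Rightarrow> real.
           (\<forall>s\<in>{slo..shi}. Ut s = indirect_util x fp fm n i slo shi s)
         \<and> mono_on {0..1} Ut
         \<and> convex_on {0..1} Ut
         \<and> 2-lipschitz_on {0..1} Ut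
         \<and> (\<forall>s\<in>{0..1}. 0 \<le> Ut s \<and> Ut s \<le> first_best fp fm n i s)"
proof -
  define J where "J = {0..<n} - {i}"
  have Jf: "finite J" unfolding J_def by simp
  have IJ: "{0..<n} = J \<union> {i}" unfolding J_def using i by auto
  define g where "g s = (if s \<in> {0..1} then fp s + fm s else 0)" for s :: real
  have fpb[measurable]: "fp \<in> borel_measurable borel" using fp_meas by simp
  have fmb[measurable]: "fm \<in> borel_measurable borel" using fm_meas by simp
  have gm[measurable]: "g \<in> borel_measurable borel" unfolding g_def by measurable
  have gn: "\<And>s. g s \<ge> 0" unfolding g_def using fp_nonneg fm_nonneg by (simp add: add_nonneg_nonneg)
  have ae: "AE s in lborel. fp s = s * g s \<and> fm s = (1 - s) * g s"
    using normal supp_out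
  proof eventually_elim
    case (elim s)
    show ?case
    proof (cases "s \<in> {0..1}")
      case True then show ?thesis using elim unfolding g_def by (auto simp: algebra_simps)
    next
      case False
      then have "s \<notin> {slo..shi}" using bounds by auto
      then have "fp s + fm s = 0" using elim by simp
      then have "fp s = 0" "fm s = 0" using fp_nonneg[of s] fm_nonneg[of s] by linarith+
      then show ?thesis using False unfolding g_def by simp
    qed
  qed
  have dp: "density lborel fp = density lborel (\<lambda>s. s * g s)"
    by (rule density_cong) (use ae in auto)
  have dm: "density lborel fm = density lborel (\<lambda>s. (1 - s) * g s)"
    by (rule density_cong) (use ae in auto)
  have pfp: "prob_space (density lborel fp)"
  proof
    have "emeasure (density lborel fp) (space (density lborel fp)) = (\<integral>\<^sup>+ s. ennreal (fp s) * indicator UNIV s \<partial>lborel)"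
      by (subst emeasure_density) auto
    then show "emeasure (density lborel fp) (space (density lborel fp)) = 1" using fp_prob by simp
  qed
  have pfm: "prob_space (density lborel fm)"
  proof
    have "emeasure (density lborel fm) (space (density lborel fm)) = (\<integral>\<^sup>+ s. ennreal (fm s) * indicator UNIV s \<partial>lborel)"
      by (subst emeasure_density) auto
    then show "emeasure (density lborel fm) (space (density lborel fm)) = 1" using fm_prob by simp
  qed
  define Q where "Q = PiM J (\<lambda>_. lborel :: real measure)"
  define A where "A = (\<lambda>\<sigma>. \<Prod>k\<in>J. \<sigma> k * g (\<sigma> k))"
  define B where "B = (\<lambda>\<sigma>. \<Prod>k\<in>J. (1 - \<sigma> k) * g (\<sigma> k))"
  have an: "0 \<le> s * g s" for s unfolding g_def using fp_nonneg[of s] fm_nonneg[of s] by auto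
  have bn: "0 \<le> (1 - s) * g s" for s unfolding g_def using fp_nonneg[of s] fm_nonneg[of s] by auto
  have An: "\<And>\<sigma>. A \<sigma> \<ge> 0" unfolding A_def using an by (intro prod_nonneg) auto
  have Bn: "\<And>\<sigma>. B \<sigma> \<ge> 0" unfolding B_def using bn by (intro prod_nonneg) auto
  have sfp: "sigma_finite_measure (density lborel (\<lambda>s. s * g s))" using pfp dp prob_space_imp_sigma_finite by metis
  have sfm: "sigma_finite_measure (density lborel (\<lambda>s. (1 - s) * g s))" using pfm dm prob_space_imp_sigma_finite by metis
  have amf[measurable]: "(\<lambda>s. s * g s) \<in> borel_measurable borel" by measurable
  have bmf[measurable]: "(\<lambda>s. (1 - s) * g s) \<in> borel_measurable borel" by measurable
  have OLp: "others_law fp n i = density Q (\<lambda>\<sigma>. ennreal (A \<sigma>))"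
    unfolding others_law_def J_def[symmetric] Q_def A_def dp by (rule PiM_density_prod[OF Jf amf an sfp])
  have OLm: "others_law fm n i = density Q (\<lambda>\<sigma>. ennreal (B \<sigma>))"
    unfolding others_law_def J_def[symmetric] Q_def B_def dm by (rule PiM_density_prod[OF Jf bmf bn sfm])
  have PA: "prob_space (density Q (\<lambda>\<sigma>. ennreal (A \<sigma>)))"
    unfolding OLp[symmetric] others_law_def by (rule prob_space_PiM) (use pfp in simp)
  have PB: "prob_space (density Q (\<lambda>\<sigma>. ennreal (B \<sigma>)))"
    unfolding OLm[symmetric] others_law_def by (rule prob_space_PiM) (use pfm in simp)
  have xm[measurable]: "x \<in> borel_measurable (PiM {0..<n} (\<lambda>_. lborel))" by (rule x_meas)
  have ym: "(\<lambda>\<sigma>. x (\<sigma>(i:=t))) \<in> borel_measurable Q" for t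
  proof -
    have "(\<lambda>\<sigma>. \<sigma>(i:=t)) \<in> measurable Q (PiM {0..<n} (\<lambda>_. lborel))"
      unfolding Q_def by (rule measurable_fun_upd[OF IJ]) auto
    then show ?thesis using xm by (rule measurable_comp[unfolded comp_def])
  qed
  have yb: "0 \<le> x (\<sigma>(i:=t)) \<and> x (\<sigma>(i:=t)) \<le> 1" for \<sigma> t using x_range by blast
  have cap: "cond_alloc x fp n i t = integral\<^sup>L (density Q (\<lambda>\<sigma>. ennreal (A \<sigma>))) (\<lambda>\<sigma>. x (\<sigma>(i:=t)))" for t
    unfolding cond_alloc_def OLp ..
  have cam: "cond_alloc x fm n i t = integral\<^sup>L (density Q (\<lambda>\<sigma>. ennreal (B \<sigma>))) (\<lambda>\<sigma>. x (\<sigma>(i:=t)))" for t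
    unfolding cond_alloc_def OLm ..
  have ab: "0 \<le> cond_alloc x fp n i t \<and> cond_alloc x fp n i t \<le> 1 \<and> 0 \<le> cond_alloc x fm n i t \<and> cond_alloc x fm n i t \<le> 1" for t
    unfolding cap cam
    using prob_int_bounds[OF PA, of "\<lambda>\<sigma>. x (\<sigma>(i:=t))"] prob_int_bounds[OF PB, of "\<lambda>\<sigma>. x (\<sigma>(i:=t))"]
      ym[of t] yb by simp
  have fbeq: "first_best fp fm n i s = s * measure (density Q (\<lambda>\<sigma>. ennreal (A \<sigma>))) ({\<sigma>. s * (\<Prod>k\<in>J. \<sigma> k) \<ge> (1 - s) * (\<Prod>k\<in>J. (1 - \<sigma> k))} \<inter> space (density Q (\<lambda>\<sigma>. ennreal (A \<sigma>))))
     - (1 - s) * measure (density Q (\<lambda>\<sigma>. ennreal (B \<sigma>))) ({\<sigma>. s * (\<Prod>k\<in>J. \<sigma> k) \<ge> (1 - s) * (\<Prod>k\<in>J. (1 - \<sigma> k))} \<inter> space (density Q (\<lambda>\<sigma>. ennreal (B \<sigma>))))" for s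
    unfolding first_best_def eff_event_def J_def[symmetric] OLp OLm ..
  have fbb: "s * cond_alloc x fp n i t - (1 - s) * cond_alloc x fm n i t \<le> first_best fp fm n i s" for s t
    unfolding cap cam fbeq
    by (rule fb_bound[OF Jf gm gn A_def B_def Q_def PA PB An Bn]) (use ym yb in auto)
  have fb0: "0 \<le> first_best fp fm n i s" for s
    using fb_bound[OF Jf gm gn A_def B_def Q_def PA PB An Bn, where y="\<lambda>_. 0" and s=s] unfolding fbeq by simp
  note SA = sup_affine[of "{slo..shi}" "\<lambda>t. cond_alloc x fp n i t" "\<lambda>t. cond_alloc x fm n i t"]
  have T: "{slo..shi} \<noteq> {}" using bounds by simp
  define Ut where "Ut = (\<lambda>s. max 0 (SUP t\<in>{slo..shi}. s * cond_alloc x fp n i t - (1-s) * cond_alloc x fm n i t))"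
  show ?thesis
  proof (intro exI[of _ Ut] conjI ballI)
    show "mono_on {0..1} Ut" unfolding Ut_def by (rule SA(1)[OF T ab])
    show "convex_on {0..1} Ut" unfolding Ut_def by (rule SA(2)[OF T ab])
    show "2-lipschitz_on {0..1} Ut" unfolding Ut_def by (rule SA(3)[OF T ab])
    fix s :: real assume s: "s \<in> {0..1}"
    show "0 \<le> Ut s" unfolding Ut_def by (rule SA(5)[OF T ab])
    show "Ut s \<le> first_best fp fm n i s" unfolding Ut_def by (rule SA(6)[OF T ab fb0 fbb])
  next
    fix s :: real assume s: "s \<in> {slo..shi}"
    have "0 \<le> s * cond_alloc x fp n i s - (1-s) * cond_alloc x fm n i s" using P[OF s] unfolding util_def .
    then show "Ut s = indirect_util x fp fm n i slo shi s"
      unfolding Ut_def indirect_util_def util_def by (rule SA(7)[OF T ab s])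
  qed
qed

end
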